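(* Let $P$ be a maximal ranked poset. Then the number of triangular $2$-faces of the order polytope $\mathcal O(P)$ is less than or equal to the number of triangular $2$-faces of the chain polytope $\mathcal C(P)$.
   Context: For a finite poset $P=\{p_1,\dots,p_d\}$, the order polytope is $\mathcal O(P)=\{x\in\mathbb R^d: 0\le x_i\le 1 \text{ for all } i,\ x_i\ge x_j \text{ if } p_i\le p_j \text{ in } P\}$ and the chain polytope is $\mathcal C(P)=\{x\in\mathbb R^d: x_i\ge 0 \text{ for all } i,\ x_{i_1}+\dots+x_{i_k}\le 1 \text{ if } p_{i_1}<\dots<p_{i_k} \text{ in } P\}$. A triangular 2-face is a 2-dimensional face with exactly three vertices. The length of a chain $C$ is $|C|-1$; $P$ is graded of rank $n$ if every maximal chain has length $n$, and then $P=\bigcup_{i=0}^n P_i$ where every maximal chain is $p_0<\dots<p_n$ with $p_i\in P_i$ (elements of rank $i$). $P$ is a maximal ranked poset if it is graded and any two elements of distinct ranks are comparable. *)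

theory Defs
  imports "HOL-Analysis.Analysis"
begin

text \<open>A finite poset is modelled by a finite type 'n (the elements p_1..p_d)
 together with a partial order relation le on it. Points of R^d are real^'n.\<close>

definition poset :: "('n \<Rightarrow> 'n \<Rightarrow> bool) \<Rightarrow> bool" where
  "poset le \<longleftrightarrow> (\<forall>a. le a a) \<and> (\<forall>a b. le a b \<and> le b a \<longrightarrow> a = b)
     \<and> (\<forall>a b c. le a b \<and> le b c \<longrightarrow> le a c)"

definition is_chain :: "('n \<Rightarrow> 'n \<Rightarrow> bool) \<Rightarrow> 'n set \<Rightarrow> bool" where
  "is_chain le C \<longleftrightarrow> (\<forall>a\<in>C. \<forall>b\<in>C. le a b \<or> le b a)"

definition maximal_chain :: "('n \<Rightarrow> 'n \<Rightarrow> bool) \<Rightarrow> 'n set \<Rightarrow> bool" where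
  "maximal_chain le C \<longleftrightarrow> is_chain le C \<and> (\<forall>D. is_chain le D \<and> C \<subseteq> D \<longrightarrow> D = C)"

definition graded_of_rank :: "('n::finite \<Rightarrow> 'n \<Rightarrow> bool) \<Rightarrow> nat \<Rightarrow> bool" where
  "graded_of_rank le n \<longleftrightarrow> (\<forall>C. maximal_chain le C \<longrightarrow> card C - 1 = n)"

definition graded :: "('n::finite \<Rightarrow> 'n \<Rightarrow> bool) \<Rightarrow> bool" where
  "graded le \<longleftrightarrow> (\<exists>n. graded_of_rank le n)"

text \<open>Rank of an element: the maximal length of a chain whose top element is p
 (in a graded poset this is the index i with p in P_i).\<close>
definition rank :: "('n::finite \<Rightarrow> 'n \<Rightarrow> bool) \<Rightarrow> 'n \<Rightarrow> nat" where
  "rank le p = Max {card C - 1 | C. is_chain le C \<and> p \<in> C \<and> (\<forall>q\<in>C. le q p)}"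

definition maximal_ranked :: "('n::finite \<Rightarrow> 'n \<Rightarrow> bool) \<Rightarrow> bool" where
  "maximal_ranked le \<longleftrightarrow> graded le \<and>
     (\<forall>p q. rank le p \<noteq> rank le q \<longrightarrow> le p q \<or> le q p)"

definition order_polytope :: "('n::finite \<Rightarrow> 'n \<Rightarrow> bool) \<Rightarrow> (real^'n) set" where
  "order_polytope le = {x. (\<forall>i. 0 \<le> x$i \<and> x$i \<le> 1) \<and> (\<forall>i j. le i j \<longrightarrow> x$j \<le> x$i)}"

definition chain_polytope :: "('n::finite \<Rightarrow> 'n \<Rightarrow> bool) \<Rightarrow> (real^'n) set" where
  "chain_polytope le = {x. (\<forall>i. 0 \<le> x$i) \<and>
      (\<forall>C. is_chain le C \<longrightarrow> (\<Sum>i\<in>C. x$i) \<le> 1)}"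

definition triangular_2faces :: "('a::euclidean_space) set \<Rightarrow> 'a set set" where
  "triangular_2faces S = {F. F face_of S \<and> aff_dim F = 2 \<and>
      card {v. v extreme_point_of F} = 3}"

end

theory Submission
  imports Defs
begin

definition ind :: "'n set \<Rightarrow> real^'n" where
  "ind D = (\<chi> i. if i \<in> D then 1 else 0)"

lemma ind_nth [simp]: "ind D $ i = (if i \<in> D then 1 else 0)"
  by (simp add: ind_def)

lemma ind_inj: "ind A = ind B \<Longrightarrow> A = B"
proof -
  assume h: "ind A = ind B"
  have "\<And>i. i \<in> A \<longleftrightarrow> i \<in> B"
  proof -
    fix i have "ind A $ i = ind B $ i" using h by simp
    then show "i \<in> A \<longleftrightarrow> i \<in> B" by (auto split: if_splits)
  qed
  then show ?thesis by blast
qed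

definition cube :: "(real^'n) set" where
  "cube = {x. \<forall>i. 0 \<le> x$i \<and> x$i \<le> 1}"

lemma zero_one_extreme:
  fixes x :: "real^'n"
  assumes "x \<in> S" "S \<subseteq> cube" "\<And>i. x$i = 0 \<or> x$i = 1"
  shows "x extreme_point_of S"
  unfolding extreme_point_of_def
proof (intro conjI ballI notI)
  show "x \<in> S" by fact
  fix a b assume a: "a \<in> S" and b: "b \<in> S" and xs: "x \<in> open_segment a b"
  then obtain u where u: "a \<noteq> b" "0 < u" "u < 1" "x = (1 - u) *\<^sub>R a + u *\<^sub>R b"
    by (auto simp: in_segment)
  then obtain i where i: "a$i \<noteq> b$i" by (metis vec_eq_iff)
  have xi: "x$i = (1-u) * a$i + u * b$i" using u by simp
  have ab: "0 \<le> a$i" "a$i \<le> 1" "0 \<le> b$i" "b$i \<le> 1" using a b assms(2) by (auto simp: cube_def)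
  have "0 < x$i \<and> x$i < 1"
  proof (cases "a$i < b$i")
    case True
    have "(1-u) * a$i + u * b$i > (1-u) * a$i + u * a$i" using True u by simp
    moreover have "(1-u) * a$i + u * b$i < (1-u) * b$i + u * b$i" using True u by simp
    ultimately show ?thesis using xi ab by (simp add: algebra_simps)
  next
    case False
    then have F: "b$i < a$i" using i by simp
    have "(1-u) * a$i + u * b$i > (1-u) * b$i + u * b$i" using F u by simp
    moreover have "(1-u) * a$i + u * b$i < (1-u) * a$i + u * a$i" using F u by simp
    ultimately show ?thesis using xi ab by (simp add: algebra_simps)
  qed
  then show False using assms(3)[of i] by auto
qed

lemma face_exchange:
  fixes u v y z :: "real^'n"
  assumes F: "F face_of S" and uv: "u \<in> F" "v \<in> F" and yz: "y \<in> S" "z \<in> S"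
    and eq: "u + v = y + z"
  shows "y \<in> F \<and> z \<in> F"
proof -
  have "closed_segment u v \<subseteq> F"
    using face_of_imp_convex[OF F] uv by (simp add: convex_contains_segment)
  then have m: "midpoint u v \<in> F" using midpoint_in_closed_segment by blast
  have mm: "midpoint u v = midpoint y z" using eq by (simp add: midpoint_def)
  show ?thesis
  proof (cases "y = z")
    case True
    then have "midpoint u v = y" using mm by simp
    then show ?thesis using True m by simp
  next
    case False
    then have "midpoint u v \<in> open_segment y z" using mm by simp
    then show ?thesis using F m yz unfolding face_of_def by blast
  qed
qed

definition OP :: "('n \<Rightarrow> nat) \<Rightarrow> (real^'n) set" where
  "OP r = {x. (\<forall>i. 0 \<le> x$i \<and> x$i \<le> 1) \<and> (\<forall>i j. r i < r j \<longrightarrow> x$j \<le> x$i)}"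

definition down :: "('n \<Rightarrow> nat) \<Rightarrow> 'n set \<Rightarrow> bool" where
  "down r D \<longleftrightarrow> (\<forall>p q. q \<in> D \<longrightarrow> r p < r q \<longrightarrow> p \<in> D)"

context fixes r :: "'n::finite \<Rightarrow> nat" begin

lemma OP_cube: "OP r \<subseteq> cube" by (auto simp: OP_def cube_def)

lemma convex_OP: "convex (OP r)"
  unfolding convex_def
proof (intro ballI allI impI)
  fix x y :: "real^'n" and u v :: real
  assume xO: "x \<in> OP r" and yO: "y \<in> OP r" and uv: "0 \<le> u" "0 \<le> v" "u + v = 1"
  have x: "\<forall>i. 0 \<le> x $ i \<and> x $ i \<le> 1" "\<forall>i j. r i < r j \<longrightarrow> x $ j \<le> x $ i"
    using xO by (auto simp: OP_def)
  have y: "\<forall>i. 0 \<le> y $ i \<and> y $ i \<le> 1" "\<forall>i j. r i < r j \<longrightarrow> y $ j \<le> y $ i"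
    using yO by (auto simp: OP_def)
  have A: "0 \<le> u * x $ i + v * y $ i" for i using x y uv by simp
  have B: "u * x $ i + v * y $ i \<le> 1" for i
  proof -
    have "u * x $ i + v * y $ i \<le> u * 1 + v * 1"
      using x y uv by (intro add_mono mult_left_mono) auto
    then show ?thesis using uv by simp
  qed
  have C: "u * x $ j + v * y $ j \<le> u * x $ i + v * y $ i" if "r i < r j" for i j
    using x y uv that by (intro add_mono mult_left_mono) auto
  show "u *\<^sub>R x + v *\<^sub>R y \<in> OP r"
    using A B C by (simp add: OP_def)
qed

lemma compact_OP: "compact (OP r)"
proof -
  have "closed (OP r)"
    unfolding OP_def
    by (intro closed_Collect_conj closed_Collect_all closed_Collect_imp closed_Collect_le
          continuous_intros) auto
  moreover have "bounded (OP r)"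
    unfolding bounded_iff
  proof (intro exI ballI)
    fix x :: "real^'n" assume "x \<in> OP r"
    then have "\<And>i. \<bar>x$i\<bar> \<le> 1" by (auto simp: OP_def)
    then have "sum (\<lambda>i. \<bar>x$i\<bar>) UNIV \<le> sum (\<lambda>i. 1) (UNIV::'n set)" by (intro sum_mono) auto
    then show "norm x \<le> real CARD('n)" using norm_le_l1_cart[of x] by simp
  qed
  ultimately show ?thesis by (simp add: compact_eq_bounded_closed)
qed

lemma ind_OP: "down r D \<Longrightarrow> ind D \<in> OP r"
  by (auto simp: OP_def down_def)

lemma ext_OP:
  assumes ext: "x extreme_point_of OP r"
  shows "\<exists>D. down r D \<and> x = ind D"
proof -
  have xO: "x \<in> OP r" using ext by (simp add: extreme_point_of_def)
  have zo: "x$p = 0 \<or> x$p = 1" for p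
  proof (rule ccontr)
    assume "\<not> (x$p = 0 \<or> x$p = 1)"
    then have c: "0 < x$p" "x$p < 1" using xO by (auto simp: OP_def less_le)
    define c where "c = x$p"
    define E where "E = {q. x$q = c}"
    define M where "M = {\<bar>x$q - c\<bar> | q. x$q \<noteq> c} \<union> {c, 1 - c}"
    have finM: "finite M" unfolding M_def by simp
    have Mne: "M \<noteq> {}" unfolding M_def by simp
    define d where "d = Min M"
    have Mpos: "\<forall>m\<in>M. 0 < m" using c unfolding M_def c_def by auto
    have d0: "0 < d" unfolding d_def using finM Mne Mpos by simp
    have dq: "d \<le> \<bar>x$q - c\<bar>" if "x$q \<noteq> c" for q
      unfolding d_def using finM that by (intro Min_le) (auto simp: M_def)
    have cM: "c \<in> M" "1 - c \<in> M" by (auto simp: M_def)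
    have dc: "d \<le> c" "d \<le> 1 - c" unfolding d_def using finM cM by (auto intro!: Min_le)
    define e where "e = d / 2"
    have e: "0 < e" "e < d" using d0 by (auto simp: e_def)
    define y where "y = x + e *\<^sub>R ind E"
    define z where "z = x - e *\<^sub>R ind E"
    have yz_nth: "y$q = (if x$q = c then c + e else x$q)" "z$q = (if x$q = c then c - e else x$q)" for q
      by (auto simp: y_def z_def E_def)
    have yO: "y \<in> OP r"
      unfolding OP_def
    proof (clarsimp, intro conjI allI impI)
      fix i show "0 \<le> y$i" using xO c e dc by (auto simp: yz_nth OP_def c_def)
      show "y$i \<le> 1" using xO c e dc by (auto simp: yz_nth OP_def c_def)
    next
      fix i j assume ij: "r i < r j"
      then have le: "x$j \<le> x$i" using xO by (auto simp: OP_def)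
      show "y$j \<le> y$i"
      proof (cases "x$i = c"; cases "x$j = c")
        assume "x$i = c" "x$j \<noteq> c"
        then show ?thesis using le e by (simp add: yz_nth)
      next
        assume "x$i \<noteq> c" "x$j = c"
        then show ?thesis using le e dq[of i] by (simp add: yz_nth)
      qed (use le in \<open>auto simp: yz_nth\<close>)
    qed
    have zO: "z \<in> OP r"
      unfolding OP_def
    proof (clarsimp, intro conjI allI impI)
      fix i show "0 \<le> z$i" using xO c e dc by (auto simp: yz_nth OP_def c_def)
      show "z$i \<le> 1" using xO c e dc by (auto simp: yz_nth OP_def c_def)
    next
      fix i j assume ij: "r i < r j"
      then have le: "x$j \<le> x$i" using xO by (auto simp: OP_def)
      show "z$j \<le> z$i"
      proof (cases "x$i = c"; cases "x$j = c")
        assume "x$i = c" "x$j \<noteq> c"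
        then show ?thesis using le e dq[of j] by (simp add: yz_nth)
      next
        assume "x$i \<noteq> c" "x$j = c"
        then show ?thesis using le e by (simp add: yz_nth)
      qed (use le in \<open>auto simp: yz_nth\<close>)
    qed
    have "y \<noteq> z" using e yz_nth[of p] by (auto simp: c_def dest: arg_cong[where f="\<lambda>v. v$p"])
    moreover have "midpoint y z = x" by (simp add: midpoint_def y_def z_def vec_eq_iff)
    ultimately have "x \<in> open_segment y z" by (metis midpoint_in_open_segment)
    then show False using ext yO zO by (auto simp: extreme_point_of_def)
  qed
  define D where "D = {p. x$p = 1}"
  have "down r D" unfolding down_def D_def
  proof (clarsimp)
    fix p q assume "x$q = 1" "r p < r q"
    then have "x$q \<le> x$p" using xO unfolding OP_def by blast
    then have "1 \<le> x$p" using \<open>x$q = 1\<close> by simp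
    moreover have "x$p \<le> 1" using xO by (simp add: OP_def)
    ultimately show "x$p = 1" by simp
  qed
  moreover have "x = ind D" using zo by (auto simp: vec_eq_iff D_def)
  ultimately show ?thesis by blast
qed

end

context fixes r :: "'n::finite \<Rightarrow> nat" begin

definition conn :: "'n set \<Rightarrow> bool" where
  "conn A \<longleftrightarrow> (\<exists>a. A = {a}) \<or> (\<exists>a\<in>A. \<exists>b\<in>A. r a \<noteq> r b)"

definition ocrit :: "'n set \<Rightarrow> 'n set \<Rightarrow> 'n set \<Rightarrow> bool" where
  "ocrit I J K \<longleftrightarrow> down r I \<and> down r J \<and> down r K \<and> I \<subset> J \<and> J \<subset> K \<and>
     conn (J - I) \<and> conn (K - J) \<and> (\<exists>a\<in>J - I. \<exists>b\<in>K - J. r a < r b)"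

lemma ind_sum:
  assumes "A \<inter> B = D \<inter> D'" "A \<union> B = D \<union> D'"
  shows "ind A + ind B = (ind D + ind D' :: real^'n)"
proof -
  have "ind A $ i + ind B $ i = ind D $ i + ind D' $ i" for i
  proof -
    have "i \<in> A \<and> i \<in> B \<longleftrightarrow> i \<in> D \<and> i \<in> D'" "i \<in> A \<or> i \<in> B \<longleftrightarrow> i \<in> D \<or> i \<in> D'"
      using assms by blast+
    then show ?thesis by (auto simp: ind_nth)
  qed
  then show ?thesis by (simp add: vec_eq_iff)
qed

lemma conn_gap:
  assumes dA: "down r A" and dB: "down r B" and AB: "A \<subset> B"
    and H: "\<And>D D'. down r D \<Longrightarrow> down r D' \<Longrightarrow> A \<inter> B = D \<inter> D' \<Longrightarrow> A \<union> B = D \<union> D' \<Longrightarrow> D \<in> \<D>"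
    and N: "\<And>E. E \<in> \<D> \<Longrightarrow> \<not> (A \<subset> E \<and> E \<subset> B)"
  shows "conn (B - A)"
proof (rule ccontr)
  assume nc: "\<not> conn (B - A)"
  obtain a where a: "a \<in> B" "a \<notin> A" using AB by blast
  have same: "\<And>x y. x \<in> B - A \<Longrightarrow> y \<in> B - A \<Longrightarrow> r x = r y" using nc unfolding conn_def by blast
  have ns: "B - A \<noteq> {a}" using nc unfolding conn_def by blast
  define D where "D = insert a A"
  define D' where "D' = B - {a}"
  have "down r D" unfolding down_def D_def
  proof (intro allI impI)
    fix p q assume q: "q \<in> insert a A" and pq: "r p < r q"
    show "p \<in> insert a A"
    proof (cases "q = a")
      case True
      then have "p \<in> B" using dB a pq unfolding down_def by blast
      moreover have "p \<notin> B - A" using same[of p a] a True pq by auto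
      ultimately show ?thesis by blast
    next
      case False
      then have "q \<in> A" using q by blast
      then show ?thesis using dA pq unfolding down_def by blast
    qed
  qed
  moreover have "down r D'" unfolding down_def D'_def
  proof (intro allI impI)
    fix p q assume q: "q \<in> B - {a}" and pq: "r p < r q"
    then have pB: "p \<in> B" using dB unfolding down_def by blast
    have "p \<noteq> a"
    proof
      assume "p = a"
      show False
      proof (cases "q \<in> A")
        case True
        then show False using dA pq a \<open>p = a\<close> unfolding down_def by blast
      next
        case False
        then show False using same[of q a] q a pq \<open>p = a\<close> by auto
      qed
    qed
    then show "p \<in> B - {a}" using pB by blast
  qed
  moreover have "A \<inter> B = D \<inter> D'" "A \<union> B = D \<union> D'" using AB a by (auto simp: D_def D'_def)
  ultimately have "D \<in> \<D>" using H by blast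
  moreover have "A \<subset> D" using a by (auto simp: D_def)
  moreover have "D \<subset> B" using a AB ns by (auto simp: D_def)
  ultimately show False using N by blast
qed

lemma comb_ocrit:
  assumes dI: "down r I" and dJ: "down r J" and dK: "down r K" and IJ: "I \<subset> J" and JK: "J \<subset> K"
    and H: "\<And>A B D D'. A \<in> {I,J,K} \<Longrightarrow> B \<in> {I,J,K} \<Longrightarrow> down r D \<Longrightarrow> down r D' \<Longrightarrow>
              A \<inter> B = D \<inter> D' \<Longrightarrow> A \<union> B = D \<union> D' \<Longrightarrow> D \<in> {I,J,K}"
  shows "ocrit I J K"
  unfolding ocrit_def
proof (intro conjI)
  show "conn (J - I)"
  proof (rule conn_gap[OF dI dJ IJ, of "{I,J,K}"])
    fix D D' assume "down r D" "down r D'" "I \<inter> J = D \<inter> D'" "I \<union> J = D \<union> D'"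
    then show "D \<in> {I,J,K}" using H[of I J D D'] by blast
  next
    fix E assume "E \<in> {I,J,K}" then show "\<not> (I \<subset> E \<and> E \<subset> J)" using IJ JK by auto
  qed
  show "conn (K - J)"
  proof (rule conn_gap[OF dJ dK JK, of "{I,J,K}"])
    fix D D' assume "down r D" "down r D'" "J \<inter> K = D \<inter> D'" "J \<union> K = D \<union> D'"
    then show "D \<in> {I,J,K}" using H[of J K D D'] by blast
  next
    fix E assume "E \<in> {I,J,K}" then show "\<not> (J \<subset> E \<and> E \<subset> K)" using IJ JK by auto
  qed
  show "\<exists>a\<in>J - I. \<exists>b\<in>K - J. r a < r b"
  proof (rule ccontr)
    assume nab: "\<not> ?thesis"
    define D where "D = I \<union> (K - J)"
    have "down r D" unfolding down_def D_def
    proof (intro allI impI)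
      fix p q assume q: "q \<in> I \<union> (K - J)" and pq: "r p < r q"
      show "p \<in> I \<union> (K - J)"
      proof (cases "q \<in> I")
        case True then show ?thesis using dI pq unfolding down_def by blast
      next
        case False
        then have qKJ: "q \<in> K - J" using q by blast
        then have "p \<in> K" using dK pq unfolding down_def by blast
        moreover have "p \<notin> J - I" using nab qKJ pq by blast
        ultimately show ?thesis by blast
      qed
    qed
    moreover have "I \<inter> K = D \<inter> J" "I \<union> K = D \<union> J" using IJ JK by (auto simp: D_def)
    ultimately have "D \<in> {I,J,K}" using H[of I K D J] dJ by blast
    moreover have "D \<noteq> I" using IJ JK by (auto simp: D_def)
    moreover have "D \<noteq> J" using IJ JK by (auto simp: D_def)
    moreover have "D \<noteq> K" using IJ JK by (auto simp: D_def)
    ultimately show False by blast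
  qed
qed (use assms in auto)

lemma comb_chain:
  assumes dA: "down r A" and dB: "down r B" and AD: "A \<in> \<D>" and BD: "B \<in> \<D>"
    and H: "\<And>D D'. down r D \<Longrightarrow> down r D' \<Longrightarrow> A \<inter> B = D \<inter> D' \<Longrightarrow> A \<union> B = D \<union> D' \<Longrightarrow> D \<in> \<D> \<and> D' \<in> \<D>"
    and four: "\<And>P Q R S. P \<in> \<D> \<Longrightarrow> Q \<in> \<D> \<Longrightarrow> R \<in> \<D> \<Longrightarrow> S \<in> \<D> \<Longrightarrow>
                P = Q \<or> P = R \<or> P = S \<or> Q = R \<or> Q = S \<or> R = S"
  shows "A \<subseteq> B \<or> B \<subseteq> A"
proof (rule ccontr)
  assume nc: "\<not> ?thesis"
  have "down r (A \<union> B)" "down r (A \<inter> B)" using dA dB unfolding down_def by blast+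
  then have "A \<union> B \<in> \<D>" "A \<inter> B \<in> \<D>" using H[of "A \<union> B" "A \<inter> B"] by auto
  then have u: "A \<union> B \<in> \<D>" and i: "A \<inter> B \<in> \<D>" by auto
  have "A \<noteq> B" "A \<union> B \<noteq> A" "A \<union> B \<noteq> B" "A \<inter> B \<noteq> A" "A \<inter> B \<noteq> B" "A \<union> B \<noteq> A \<inter> B"
    using nc by blast+
  then show False using four[OF AD BD u i] by blast
qed

end

lemma order3:
  fixes X Y Z :: "'a set"
  assumes "X \<noteq> Y" "Y \<noteq> Z" "X \<noteq> Z"
    and "X \<subseteq> Y \<or> Y \<subseteq> X" "Y \<subseteq> Z \<or> Z \<subseteq> Y" "X \<subseteq> Z \<or> Z \<subseteq> X"
  shows "\<exists>I J K. {X,Y,Z} = {I,J,K} \<and> I \<subset> J \<and> J \<subset> K"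
proof (cases "X \<subseteq> Y")
  case XY: True
  show ?thesis
  proof (cases "Y \<subseteq> Z")
    case True then show ?thesis using XY assms by (intro exI[of _ X] exI[of _ Y] exI[of _ Z]) auto
  next
    case False
    then have ZY: "Z \<subseteq> Y" using assms by blast
    show ?thesis
    proof (cases "X \<subseteq> Z")
      case True then show ?thesis using XY ZY assms by (intro exI[of _ X] exI[of _ Z] exI[of _ Y]) auto
    next
      case False then have "Z \<subseteq> X" using assms by blast
      then show ?thesis using XY ZY assms by (intro exI[of _ Z] exI[of _ X] exI[of _ Y]) auto
    qed
  qed
next
  case False
  then have YX: "Y \<subseteq> X" using assms by blast
  show ?thesis
  proof (cases "X \<subseteq> Z")
    case True then show ?thesis using YX assms by (intro exI[of _ Y] exI[of _ X] exI[of _ Z]) auto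
  next
    case False
    then have ZX: "Z \<subseteq> X" using assms by blast
    show ?thesis
    proof (cases "Y \<subseteq> Z")
      case True then show ?thesis using YX ZX assms by (intro exI[of _ Y] exI[of _ Z] exI[of _ X]) auto
    next
      case False then have "Z \<subseteq> Y" using assms by blast
      then show ?thesis using YX ZX assms by (intro exI[of _ Z] exI[of _ Y] exI[of _ X]) auto
    qed
  qed
qed

context fixes r :: "'n::finite \<Rightarrow> nat" begin

lemma O_tri:
  assumes F: "F \<in> triangular_2faces (OP r)"
  shows "\<exists>I J K. ocrit r I J K \<and> {v. v extreme_point_of F} = ind ` {I,J,K}
            \<and> F = convex hull (ind ` {I,J,K})"
proof -
  have Ff: "F face_of OP r" and c3: "card {v. v extreme_point_of F} = 3"
    using F by (auto simp: triangular_2faces_def)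
  define E where "E = {v. v extreme_point_of F}"
  have FO: "F \<subseteq> OP r" using Ff face_of_imp_subset by blast
  have Eind: "\<exists>D. down r D \<and> v = ind D" if "v \<in> E" for v
    using that ext_OP extreme_point_of_face[OF Ff] unfolding E_def by blast
  obtain x y z where xyz: "E = {x,y,z}" "x \<noteq> y" "y \<noteq> z" "x \<noteq> z"
    using c3 unfolding E_def card_3_iff by blast
  obtain X where X: "down r X" "x = ind X" using Eind xyz by blast
  obtain Y where Y: "down r Y" "y = ind Y" using Eind xyz by blast
  obtain Z where Z: "down r Z" "z = ind Z" using Eind xyz by blast
  have EF: "E \<subseteq> F" unfolding E_def by (auto simp: extreme_point_of_def)
  have ind_in_E: "ind D \<in> E" if "down r D" "ind D \<in> F" for D
  proof -
    have "F \<subseteq> cube" using FO OP_cube by blast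
    then have "ind D extreme_point_of F" by (rule zero_one_extreme[OF that(2)]) simp
    then show ?thesis unfolding E_def by simp
  qed
  define \<D> where "\<D> = {X,Y,Z}"
  have Eeq: "E = ind ` \<D>" using xyz X Y Z by (auto simp: \<D>_def)
  have dD: "down r A" if "A \<in> \<D>" for A using that X Y Z by (auto simp: \<D>_def)
  have H: "D \<in> \<D> \<and> D' \<in> \<D>"
    if "A \<in> \<D>" "B \<in> \<D>" "down r D" "down r D'" "A \<inter> B = D \<inter> D'" "A \<union> B = D \<union> D'" for A B D D'
  proof -
    have a: "ind A \<in> F" "ind B \<in> F" using that(1,2) Eeq EF by auto
    have e: "ind A + ind B = (ind D + ind D' :: real^'n)" using ind_sum[OF that(5,6)] .
    have o: "ind D \<in> OP r" "ind D' \<in> OP r" using ind_OP that(3,4) by auto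
    have "ind D \<in> F \<and> ind D' \<in> F"
      using face_exchange[OF Ff a o e] .
    then have "ind D \<in> E" "ind D' \<in> E" using ind_in_E that(3,4) by auto
    then show ?thesis using Eeq ind_inj by auto
  qed
  have dist: "X \<noteq> Y" "Y \<noteq> Z" "X \<noteq> Z" using xyz X Y Z by auto
  have four: "P = Q \<or> P = R \<or> P = S \<or> Q = R \<or> Q = S \<or> R = S"
    if "P \<in> \<D>" "Q \<in> \<D>" "R \<in> \<D>" "S \<in> \<D>" for P Q R S
  proof -
    have "P = X \<or> P = Y \<or> P = Z" "Q = X \<or> Q = Y \<or> Q = Z" "R = X \<or> R = Y \<or> R = Z" "S = X \<or> S = Y \<or> S = Z"
      using that unfolding \<D>_def by auto
    then show ?thesis by fastforce
  qed
  have cmp: "A \<subseteq> B \<or> B \<subseteq> A" if "A \<in> \<D>" "B \<in> \<D>" for A B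
  proof (rule comb_chain[of r A B \<D>])
    show "down r A" "down r B" using dD that by auto
    show "A \<in> \<D>" "B \<in> \<D>" by fact+
    show "D \<in> \<D> \<and> D' \<in> \<D>" if "down r D" "down r D'" "A \<inter> B = D \<inter> D'" "A \<union> B = D \<union> D'" for D D'
      using H[OF \<open>A \<in> \<D>\<close> \<open>B \<in> \<D>\<close> that] .
    show "P = Q \<or> P = R \<or> P = S \<or> Q = R \<or> Q = S \<or> R = S"
      if "P \<in> \<D>" "Q \<in> \<D>" "R \<in> \<D>" "S \<in> \<D>" for P Q R S
      using four[OF that] .
  qed
  obtain I J K where IJK: "\<D> = {I,J,K}" "I \<subset> J" "J \<subset> K"
    using order3[OF dist cmp cmp cmp] unfolding \<D>_def by auto
  have oc: "ocrit r I J K"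
  proof (rule comb_ocrit)
    show "down r I" "down r J" "down r K" using dD IJK(1) by auto
    show "I \<subset> J" "J \<subset> K" using IJK by auto
    fix A B D D' assume "A \<in> {I,J,K}" "B \<in> {I,J,K}" "down r D" "down r D'" "A \<inter> B = D \<inter> D'" "A \<union> B = D \<union> D'"
    then show "D \<in> {I,J,K}" using H[of A B D D'] IJK(1) by simp
  qed
  have "compact F" using face_of_imp_compact[OF convex_OP compact_OP Ff] .
  then have "F = convex hull E"
    unfolding E_def using Krein_Milman_Minkowski face_of_imp_convex[OF Ff] by blast
  moreover have "E = ind ` {I,J,K}" using Eeq IJK(1) by simp
  ultimately show ?thesis using oc unfolding E_def by metis
qed

end

lemma ind_inner: "ind A \<bullet> (x::real^'n) = (\<Sum>p\<in>A. x$p)"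
proof -
  have "ind A \<bullet> x = (\<Sum>p\<in>UNIV. ind A $ p * x$p)"
    by (simp add: inner_vec_def)
  also have "\<dots> = (\<Sum>p\<in>UNIV. (if p \<in> A then x$p else 0))"
    by (intro sum.cong) auto
  also have "\<dots> = (\<Sum>p\<in>A. x$p)" by (simp add: sum.If_cases)
  finally show ?thesis .
qed

lemma ind_01: "ind A $ i = 0 \<or> ind A $ i = 1" by simp

lemma not_collinear_01:
  fixes a b c :: "real^'n"
  assumes "a \<noteq> b" "b \<noteq> c" "a \<noteq> c"
    and "\<And>i. a$i = 0 \<or> a$i = 1" "\<And>i. b$i = 0 \<or> b$i = 1" "\<And>i. c$i = 0 \<or> c$i = 1"
  shows "\<not> affine_dependent {a,b,c}"
proof -
  have cube: "{a,b,c} \<subseteq> cube" using assms(4-6) by (auto simp: cube_def) (metis order.refl zero_le_one)+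
  have ext: "v extreme_point_of {a,b,c}" if "v \<in> {a,b,c}" for v
    using that zero_one_extreme[OF _ cube] assms(4-6) by blast
  have nb: "\<not> between (y,z) v" if "v \<in> {a,b,c}" "y \<in> {a,b,c}" "z \<in> {a,b,c}" "v \<noteq> y" "v \<noteq> z" for v y z
  proof
    assume "between (y,z) v"
    then have "v \<in> closed_segment y z" by (simp add: between_mem_segment)
    then have "v \<in> open_segment y z" using that by (simp add: open_segment_def)
    then show False using ext[OF that(1)] that(2,3) by (auto simp: extreme_point_of_def)
  qed
  have "\<not> collinear {a,b,c}"
    unfolding collinear_between_cases using nb assms(1-3) by auto
  then show ?thesis using collinear_3_eq_affine_dependent by blast
qed

context fixes r :: "'n::finite \<Rightarrow> nat" begin

definition CP :: "(real^'n) set" where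
  "CP = {x. (\<forall>i. 0 \<le> x$i) \<and> (\<forall>C. inj_on r C \<longrightarrow> (\<Sum>i\<in>C. x$i) \<le> 1)}"

lemma convex_CP: "convex CP"
  unfolding convex_def
proof (intro ballI allI impI)
  fix x y :: "real^'n" and u v :: real
  assume xO: "x \<in> CP" and yO: "y \<in> CP" and uv: "0 \<le> u" "0 \<le> v" "u + v = 1"
  have A: "0 \<le> u * x $ i + v * y $ i" for i using xO yO uv by (simp add: CP_def)
  have B: "(\<Sum>i\<in>C. u * x $ i + v * y $ i) \<le> 1" if "inj_on r C" for C
  proof -
    have "(\<Sum>i\<in>C. u * x $ i + v * y $ i) = u * (\<Sum>i\<in>C. x $ i) + v * (\<Sum>i\<in>C. y $ i)"
      by (simp add: sum.distrib sum_distrib_left)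
    also have "\<dots> \<le> u * 1 + v * 1"
      using xO yO uv that by (intro add_mono mult_left_mono) (auto simp: CP_def)
    finally show ?thesis using uv by simp
  qed
  show "u *\<^sub>R x + v *\<^sub>R y \<in> CP"
    using A B by (simp add: CP_def)
qed

lemma polyhedron_CP: "polyhedron CP"
proof -
  have eq: "CP = (\<Inter>i\<in>UNIV. {x. axis i 1 \<bullet> x \<ge> 0}) \<inter> (\<Inter>C\<in>{C. inj_on r C}. {x. ind C \<bullet> x \<le> 1})"
    by (auto simp: CP_def ind_inner inner_axis' cart_eq_inner_axis)
  show ?thesis unfolding eq
    by (intro polyhedron_Int polyhedron_Inter) (auto intro: polyhedron_halfspace_le polyhedron_halfspace_ge)
qed

lemma CP_pair: "x \<in> CP \<Longrightarrow> r a \<noteq> r b \<Longrightarrow> x$a + x$b \<le> 1"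
proof -
  assume x: "x \<in> CP" and ab: "r a \<noteq> r b"
  then have "a \<noteq> b" by auto
  have "inj_on r {a,b}" using ab by auto
  then have "(\<Sum>i\<in>{a,b}. x$i) \<le> 1" using x by (auto simp: CP_def)
  then show ?thesis using \<open>a \<noteq> b\<close> by simp
qed

lemma CP_triple: "x \<in> CP \<Longrightarrow> r a \<noteq> r b \<Longrightarrow> r a \<noteq> r c \<Longrightarrow> r b \<noteq> r c \<Longrightarrow> x$a + x$b + x$c \<le> 1"
proof -
  assume x: "x \<in> CP" and ab: "r a \<noteq> r b" "r a \<noteq> r c" "r b \<noteq> r c"
  then have d: "a \<noteq> b" "a \<noteq> c" "b \<noteq> c" by auto
  have "inj_on r {a,b,c}" using ab by auto
  then have "(\<Sum>i\<in>{a,b,c}. x$i) \<le> 1" using x by (auto simp: CP_def)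
  then show ?thesis using d by (simp add: add.assoc)
qed

lemma CP_nonneg: "x \<in> CP \<Longrightarrow> 0 \<le> x$i" by (simp add: CP_def)

lemma CP_cube: "CP \<subseteq> cube"
proof
  fix x assume x: "x \<in> CP"
  have "x$i \<le> 1" for i
  proof -
    have "inj_on r {i}" by simp
    then show ?thesis using x by (force simp: CP_def)
  qed
  then show "x \<in> cube" using x by (simp add: cube_def CP_def)
qed

lemma ind_CP: "(\<And>p. p \<in> X \<Longrightarrow> r p = l) \<Longrightarrow> ind X \<in> CP"
proof -
  assume lv: "\<And>p. p \<in> X \<Longrightarrow> r p = l"
  have "(\<Sum>i\<in>C. ind X $ i) \<le> 1" if "inj_on r C" for C
  proof -
    have "(\<Sum>i\<in>C. ind X $ i) = (\<Sum>i\<in>C \<inter> X. 1)"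
      by (simp add: sum.If_cases Int_commute)
    also have "\<dots> = real (card (C \<inter> X))" by simp
    also have "card (C \<inter> X) \<le> 1"
    proof -
      have "\<forall>a\<in>C \<inter> X. \<forall>b\<in>C \<inter> X. a = b" using that lv by (auto dest: inj_onD)
      then show ?thesis using card_le_Suc0_iff_eq[of "C \<inter> X"] by simp
    qed
    finally show ?thesis by simp
  qed
  then show ?thesis by (simp add: CP_def)
qed

lemma tri_cert:
  fixes a b c w :: "real^'n" and d :: real
  assumes dist: "a \<noteq> b" "b \<noteq> c" "a \<noteq> c"
    and z1: "\<And>i. a$i = 0 \<or> a$i = 1" "\<And>i. b$i = 0 \<or> b$i = 1" "\<And>i. c$i = 0 \<or> c$i = 1"
    and inC: "a \<in> CP" "b \<in> CP" "c \<in> CP"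
    and le: "\<And>x. x \<in> CP \<Longrightarrow> w \<bullet> x \<le> d"
    and eqT: "w \<bullet> a = d" "w \<bullet> b = d" "w \<bullet> c = d"
    and hull: "\<And>x. x \<in> CP \<Longrightarrow> w \<bullet> x = d \<Longrightarrow> x \<in> convex hull {a,b,c}"
  shows "convex hull {a,b,c} \<in> triangular_2faces CP \<and> {v. v extreme_point_of convex hull {a,b,c}} = {a,b,c}"
proof -
  define F where "F = CP \<inter> {x. w \<bullet> x = d}"
  have Fface: "F face_of CP" unfolding F_def
    by (rule face_of_Int_supporting_hyperplane_le[OF convex_CP le])
  have "convex F" unfolding F_def by (intro convex_Int convex_CP convex_hyperplane)
  moreover have "{a,b,c} \<subseteq> F" using inC eqT by (auto simp: F_def)
  ultimately have "convex hull {a,b,c} \<subseteq> F" by (intro hull_minimal) auto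
  moreover have "F \<subseteq> convex hull {a,b,c}" using hull by (auto simp: F_def)
  ultimately have FH: "F = convex hull {a,b,c}" by blast
  have Hcube: "convex hull {a,b,c} \<subseteq> cube" using FH CP_cube by (auto simp: F_def)
  have ext: "{v. v extreme_point_of convex hull {a,b,c}} = {a,b,c}"
  proof
    show "{v. v extreme_point_of convex hull {a, b, c}} \<subseteq> {a, b, c}"
      using extreme_point_of_convex_hull by blast
    show "{a, b, c} \<subseteq> {v. v extreme_point_of convex hull {a, b, c}}"
      using zero_one_extreme[OF _ Hcube] z1 hull_subset[of "{a,b,c}" convex] by blast
  qed
  have "\<not> affine_dependent {a,b,c}" by (rule not_collinear_01[OF dist z1])
  then have "of_nat (card {a,b,c}) = aff_dim {a,b,c} + 1" by (rule aff_dim_affine_independent)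
  moreover have "card {a,b,c} = 3" using dist by simp
  ultimately have "aff_dim (convex hull {a,b,c}) = 2" by (simp add: aff_dim_convex_hull)
  moreover have "card {v. v extreme_point_of convex hull {a,b,c}} = 3" using ext dist by simp
  ultimately show ?thesis using Fface FH ext by (simp add: triangular_2faces_def)
qed

end

lemma exists_max: "X \<noteq> {} \<Longrightarrow> \<exists>a\<in>X. \<forall>p\<in>X. (x::real^'n::finite)$p \<le> x$a"
proof -
  assume X: "X \<noteq> {}"
  have fin: "finite ((\<lambda>p. x$p) ` X)" by simp
  have "Max ((\<lambda>p. x$p) ` X) \<in> (\<lambda>p. x$p) ` X" using X fin by (intro Max_in) auto
  then obtain a where a: "a \<in> X" "x$a = Max ((\<lambda>p. x$p) ` X)" by auto
  have "\<forall>p\<in>X. x$p \<le> x$a" using a fin by auto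
  then show ?thesis using a by blast
qed

lemma avg_le:
  fixes x :: "real^'n::finite"
  assumes "\<forall>p\<in>X. x$p \<le> x$a" "X \<noteq> {}"
  shows "(\<Sum>p\<in>X. x$p) / real (card X) \<le> x$a"
proof -
  have "(\<Sum>p\<in>X. x$p) \<le> real (card X) * x$a" using assms(1) by (intro sum_bounded_above) auto
  moreover have "real (card X) > 0" using assms(2) by (simp add: card_gt_0_iff)
  ultimately show ?thesis by (simp add: pos_divide_le_eq mult.commute)
qed

lemma avg_eq:
  fixes x :: "real^'n::finite"
  assumes "\<forall>p\<in>X. x$p \<le> x$a" "X \<noteq> {}" "(\<Sum>p\<in>X. x$p) / real (card X) = x$a"
  shows "\<forall>p\<in>X. x$p = x$a"
proof -
  have pos: "real (card X) > 0" using assms(2) by (simp add: card_gt_0_iff)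
  have "(\<Sum>p\<in>X. x$p) = real (card X) * x$a" using assms(2,3) pos by (simp add: divide_eq_eq mult.commute)
  then have "(\<Sum>p\<in>X. x$a - x$p) = 0" by (simp add: sum_subtractf)
  then have "\<forall>p\<in>X. x$a - x$p = 0" using assms(1) by (subst (asm) sum_nonneg_eq_0_iff) auto
  then show ?thesis by auto
qed

lemma sum_ind_self: "(\<Sum>p\<in>X. ind X $ p) = real (card X)" by simp
lemma sum_ind_disj: "X \<inter> Y = {} \<Longrightarrow> (\<Sum>p\<in>X. ind Y $ p) = 0" by (intro sum.neutral) auto
lemma sum_ind_sub: "X \<subseteq> Y \<Longrightarrow> (\<Sum>p\<in>X. ind Y $ p) = real (card X)"
  by (simp add: subset_iff)

context fixes r :: "'n::finite \<Rightarrow> nat" begin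

lemma tri_c:
  assumes ne: "X \<noteq> {}" "Y \<noteq> {}" "Z \<noteq> {}"
    and lv: "\<And>p. p \<in> X \<Longrightarrow> r p = i" "\<And>p. p \<in> Y \<Longrightarrow> r p = j" "\<And>p. p \<in> Z \<Longrightarrow> r p = k"
    and ijk: "i \<noteq> j" "i \<noteq> k" "j \<noteq> k"
  shows "convex hull {ind X, ind Y, ind Z} \<in> triangular_2faces (CP r)
    \<and> {v. v extreme_point_of convex hull {ind X, ind Y, ind Z}} = {ind X, ind Y, ind Z}"
proof -
  have dj: "X \<inter> Y = {}" "X \<inter> Z = {}" "Y \<inter> Z = {}" using lv ijk by fastforce+
  define R where "R = - (X \<union> Y \<union> Z)"
  have dR: "X \<inter> R = {}" "Y \<inter> R = {}" "Z \<inter> R = {}" by (auto simp: R_def)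
  define nX where "nX = real (card X)"
  define nY where "nY = real (card Y)"
  define nZ where "nZ = real (card Z)"
  have npos: "nX > 0" "nY > 0" "nZ > 0" using ne by (auto simp: nX_def nY_def nZ_def card_gt_0_iff)
  define w :: "real^'n" where "w = (1/nX) *\<^sub>R ind X + (1/nY) *\<^sub>R ind Y + (1/nZ) *\<^sub>R ind Z - ind R"
  have wx: "w \<bullet> x = (\<Sum>p\<in>X. x$p)/nX + (\<Sum>p\<in>Y. x$p)/nY + (\<Sum>p\<in>Z. x$p)/nZ - (\<Sum>p\<in>R. x$p)" for x
    by (simp add: w_def inner_add_left inner_diff_left ind_inner)
  have ne3: "ind X \<noteq> ind Y" "ind Y \<noteq> ind Z" "ind X \<noteq> ind Z"
    using ne dj by (auto dest!: ind_inj)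
  have inC: "ind X \<in> CP r" "ind Y \<in> CP r" "ind Z \<in> CP r" using lv by (auto intro: ind_CP)
  have Rnn: "0 \<le> (\<Sum>p\<in>R. x$p)" if "x \<in> CP r" for x using that by (intro sum_nonneg) (auto simp: CP_def)
  have le: "w \<bullet> x \<le> 1" if x: "x \<in> CP r" for x
  proof -
    obtain a where a: "a \<in> X" "\<forall>p\<in>X. x$p \<le> x$a" using exists_max[OF ne(1)] by blast
    obtain b where b: "b \<in> Y" "\<forall>p\<in>Y. x$p \<le> x$b" using exists_max[OF ne(2)] by blast
    obtain c where c: "c \<in> Z" "\<forall>p\<in>Z. x$p \<le> x$c" using exists_max[OF ne(3)] by blast
    have "(\<Sum>p\<in>X. x$p)/nX \<le> x$a" "(\<Sum>p\<in>Y. x$p)/nY \<le> x$b" "(\<Sum>p\<in>Z. x$p)/nZ \<le> x$c"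
      using avg_le a(2) b(2) c(2) ne unfolding nX_def nY_def nZ_def by blast+
    moreover have "x$a + x$b + x$c \<le> 1" using CP_triple[OF x] lv a b c ijk by metis
    ultimately show ?thesis using wx[of x] Rnn[OF x] by linarith
  qed
  have eqX: "w \<bullet> ind X = 1" unfolding wx using sum_ind_disj[of Y X] sum_ind_disj[of Z X] sum_ind_disj[of R X] dj dR npos ne
    by (simp add: Int_commute nX_def sum_ind_self del: ind_nth)
  have eqY: "w \<bullet> ind Y = 1" unfolding wx using sum_ind_disj[of X Y] sum_ind_disj[of Z Y] sum_ind_disj[of R Y] dj dR npos ne
    by (simp add: Int_commute nY_def sum_ind_self del: ind_nth)
  have eqZ: "w \<bullet> ind Z = 1" unfolding wx using sum_ind_disj[of X Z] sum_ind_disj[of Y Z] sum_ind_disj[of R Z] dj dR npos ne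
    by (simp add: Int_commute nZ_def sum_ind_self del: ind_nth)
  have hull: "x \<in> convex hull {ind X, ind Y, ind Z}" if x: "x \<in> CP r" "w \<bullet> x = 1" for x
  proof -
    obtain a where a: "a \<in> X" "\<forall>p\<in>X. x$p \<le> x$a" using exists_max[OF ne(1)] by blast
    obtain b where b: "b \<in> Y" "\<forall>p\<in>Y. x$p \<le> x$b" using exists_max[OF ne(2)] by blast
    obtain c where c: "c \<in> Z" "\<forall>p\<in>Z. x$p \<le> x$c" using exists_max[OF ne(3)] by blast
    have s: "(\<Sum>p\<in>X. x$p)/nX \<le> x$a" "(\<Sum>p\<in>Y. x$p)/nY \<le> x$b" "(\<Sum>p\<in>Z. x$p)/nZ \<le> x$c"
      using avg_le a(2) b(2) c(2) ne unfolding nX_def nY_def nZ_def by blast+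
    have t: "x$a + x$b + x$c \<le> 1" using CP_triple[OF x(1)] lv a b c ijk by metis
    have R0: "(\<Sum>p\<in>R. x$p) = 0" and e: "(\<Sum>p\<in>X. x$p)/nX = x$a" "(\<Sum>p\<in>Y. x$p)/nY = x$b"
       "(\<Sum>p\<in>Z. x$p)/nZ = x$c" and one: "x$a + x$b + x$c = 1"
      using s t wx[of x] x(2) Rnn[OF x(1)] by linarith+
    have Xc: "\<forall>p\<in>X. x$p = x$a" using avg_eq[OF a(2) ne(1)] e(1) unfolding nX_def by blast
    have Yc: "\<forall>p\<in>Y. x$p = x$b" using avg_eq[OF b(2) ne(2)] e(2) unfolding nY_def by blast
    have Zc: "\<forall>p\<in>Z. x$p = x$c" using avg_eq[OF c(2) ne(3)] e(3) unfolding nZ_def by blast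
    have Rc: "\<forall>p\<in>R. x$p = 0" using R0 x(1) by (subst (asm) sum_nonneg_eq_0_iff) (auto simp: CP_def)
    have nn: "0 \<le> x$a" "0 \<le> x$b" "0 \<le> x$c" using x(1) by (auto simp: CP_def)
    have xe: "x = x$a *\<^sub>R ind X + x$b *\<^sub>R ind Y + x$c *\<^sub>R ind Z"
    proof (subst vec_eq_iff, intro allI)
      fix p
      show "x$p = (x$a *\<^sub>R ind X + x$b *\<^sub>R ind Y + x$c *\<^sub>R ind Z) $ p"
      proof (cases "p \<in> X")
        case True then show ?thesis using Xc dj by auto
      next
        case nX: False
        show ?thesis
        proof (cases "p \<in> Y")
          case True then show ?thesis using Yc dj nX by auto
        next
          case nY: False
          show ?thesis
          proof (cases "p \<in> Z")
            case True then show ?thesis using Zc nX nY by auto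
          next
            case False then have "p \<in> R" using nX nY by (auto simp: R_def)
            then show ?thesis using Rc nX nY False by auto
          qed
        qed
      qed
    qed
    show ?thesis unfolding convex_hull_3 using xe nn one by blast
  qed
  show ?thesis
    by (rule tri_cert[OF ne3 ind_01 ind_01 ind_01 inC le eqX eqY eqZ hull])
qed

end

context fixes r :: "'n::finite \<Rightarrow> nat" begin

lemma tri_b:
  assumes ne: "X \<noteq> {}" "W \<noteq> {}" and x0: "x0 \<notin> X"
    and lv: "\<And>p. p \<in> insert x0 X \<Longrightarrow> r p = i" "\<And>p. p \<in> W \<Longrightarrow> r p = j"
    and ij: "i \<noteq> j"
  shows "convex hull {ind X, ind (insert x0 X), ind W} \<in> triangular_2faces (CP r)
    \<and> {v. v extreme_point_of convex hull {ind X, ind (insert x0 X), ind W}} = {ind X, ind (insert x0 X), ind W}"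
proof -
  define X' where "X' = insert x0 X"
  have dj: "X' \<inter> W = {}" using lv ij by (fastforce simp: X'_def)
  define R where "R = - (X' \<union> W)"
  have dR: "X' \<inter> R = {}" "W \<inter> R = {}" by (auto simp: R_def)
  define nX where "nX = real (card X)"
  define nW where "nW = real (card W)"
  have npos: "nX > 0" "nW > 0" using ne by (auto simp: nX_def nW_def card_gt_0_iff)
  define w :: "real^'n" where "w = (1/nX) *\<^sub>R ind X + (1/nW) *\<^sub>R ind W - ind R"
  have wx: "w \<bullet> x = (\<Sum>p\<in>X. x$p)/nX + (\<Sum>p\<in>W. x$p)/nW - (\<Sum>p\<in>R. x$p)" for x
    by (simp add: w_def inner_add_left inner_diff_left ind_inner)
  have ne3: "ind X \<noteq> ind X'" "ind X' \<noteq> ind W" "ind X \<noteq> ind W"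
    using ne dj x0 by (auto dest!: ind_inj simp: X'_def)
  have inC: "ind X \<in> CP r" "ind X' \<in> CP r" "ind W \<in> CP r" using lv by (auto intro: ind_CP simp: X'_def)
  have Rnn: "0 \<le> (\<Sum>p\<in>R. x$p)" if "x \<in> CP r" for x using that by (intro sum_nonneg) (auto simp: CP_def)
  have XX': "X \<subseteq> X'" by (auto simp: X'_def)
  have le: "w \<bullet> x \<le> 1" if x: "x \<in> CP r" for x
  proof -
    obtain a where a: "a \<in> X" "\<forall>p\<in>X. x$p \<le> x$a" using exists_max[OF ne(1)] by blast
    obtain b where b: "b \<in> W" "\<forall>p\<in>W. x$p \<le> x$b" using exists_max[OF ne(2)] by blast
    have "(\<Sum>p\<in>X. x$p)/nX \<le> x$a" "(\<Sum>p\<in>W. x$p)/nW \<le> x$b"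
      using avg_le a(2) b(2) ne unfolding nX_def nW_def by blast+
    moreover have "x$a + x$b \<le> 1" using CP_pair[OF x] lv a b ij by (metis insertCI)
    ultimately show ?thesis using wx[of x] Rnn[OF x] by linarith
  qed
  have s1: "(\<Sum>p\<in>X. ind X $ p) = nX" "(\<Sum>p\<in>X. ind X' $ p) = nX" "(\<Sum>p\<in>W. ind W $ p) = nW"
    using XX' by (simp_all add: nX_def nW_def sum_ind_sub del: ind_nth)
  have s0: "(\<Sum>p\<in>W. ind X $ p) = 0" "(\<Sum>p\<in>R. ind X $ p) = 0" "(\<Sum>p\<in>W. ind X' $ p) = 0"
     "(\<Sum>p\<in>R. ind X' $ p) = 0" "(\<Sum>p\<in>X. ind W $ p) = 0" "(\<Sum>p\<in>R. ind W $ p) = 0"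
    using dj dR XX' by - (rule sum_ind_disj, blast)+
  have eqX: "w \<bullet> ind X = 1" unfolding wx using s1 s0 npos by (simp del: ind_nth)
  have eqX': "w \<bullet> ind X' = 1" unfolding wx using s1 s0 npos by (simp del: ind_nth)
  have eqW: "w \<bullet> ind W = 1" unfolding wx using s1 s0 npos by (simp del: ind_nth)
  have hull: "x \<in> convex hull {ind X, ind X', ind W}" if x: "x \<in> CP r" "w \<bullet> x = 1" for x
  proof -
    obtain a where a: "a \<in> X" "\<forall>p\<in>X. x$p \<le> x$a" using exists_max[OF ne(1)] by blast
    obtain b where b: "b \<in> W" "\<forall>p\<in>W. x$p \<le> x$b" using exists_max[OF ne(2)] by blast
    have s: "(\<Sum>p\<in>X. x$p)/nX \<le> x$a" "(\<Sum>p\<in>W. x$p)/nW \<le> x$b"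
      using avg_le a(2) b(2) ne unfolding nX_def nW_def by blast+
    have t: "x$a + x$b \<le> 1" using CP_pair[OF x(1)] lv a b ij by (metis insertCI)
    have t0: "x$x0 + x$b \<le> 1" using CP_pair[OF x(1)] lv a b ij by (metis insertCI)
    have R0: "(\<Sum>p\<in>R. x$p) = 0" and e: "(\<Sum>p\<in>X. x$p)/nX = x$a" "(\<Sum>p\<in>W. x$p)/nW = x$b"
       and one: "x$a + x$b = 1"
      using s t wx[of x] x(2) Rnn[OF x(1)] by linarith+
    have Xc: "\<forall>p\<in>X. x$p = x$a" using avg_eq[OF a(2) ne(1)] e(1) unfolding nX_def by blast
    have Wc: "\<forall>p\<in>W. x$p = x$b" using avg_eq[OF b(2) ne(2)] e(2) unfolding nW_def by blast
    have Rc: "\<forall>p\<in>R. x$p = 0" using R0 x(1) by (subst (asm) sum_nonneg_eq_0_iff) (auto simp: CP_def)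
    have nn: "0 \<le> x$x0" "0 \<le> x$b" using x(1) by (auto simp: CP_def)
    have t1: "0 \<le> x$a - x$x0" using t0 one by linarith
    have xe: "x = (x$a - x$x0) *\<^sub>R ind X + x$x0 *\<^sub>R ind X' + x$b *\<^sub>R ind W"
    proof (subst vec_eq_iff, intro allI)
      fix p
      show "x$p = ((x$a - x$x0) *\<^sub>R ind X + x$x0 *\<^sub>R ind X' + x$b *\<^sub>R ind W) $ p"
      proof (cases "p \<in> X")
        case True then show ?thesis using Xc dj x0 XX' by auto
      next
        case nX: False
        show ?thesis
        proof (cases "p = x0")
          case True then show ?thesis using dj nX by (auto simp: X'_def)
        next
          case n0: False
          show ?thesis
          proof (cases "p \<in> W")
            case True then show ?thesis using Wc nX n0 by (auto simp: X'_def)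
          next
            case False then have "p \<in> R" using nX n0 by (auto simp: R_def X'_def)
            then show ?thesis using Rc nX n0 False by (auto simp: X'_def)
          qed
        qed
      qed
    qed
    show ?thesis unfolding convex_hull_3 using xe nn t1 one by fastforce
  qed
  show ?thesis unfolding X'_def[symmetric]
    by (rule tri_cert[OF ne3 ind_01 ind_01 ind_01 inC le eqX eqX' eqW hull])
qed

lemma tri_a:
  assumes pq: "r p \<noteq> r q"
  shows "convex hull {ind {}, ind {p}, ind {q}} \<in> triangular_2faces (CP r)
    \<and> {v. v extreme_point_of convex hull {ind {}, ind {p}, ind {q}}} = {ind {}, ind {p}, ind {q}}"
proof -
  have pq': "p \<noteq> q" using pq by auto
  define R where "R = - {p, q}"
  define w :: "real^'n" where "w = - ind R"
  have wx: "w \<bullet> x = - (\<Sum>i\<in>R. x$i)" for x by (simp add: w_def ind_inner)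
  have ne3: "ind {} \<noteq> ind {p}" "ind {p} \<noteq> ind {q}" "ind {} \<noteq> ind {q}"
    using pq' by (auto dest!: ind_inj)
  have inC: "ind {} \<in> CP r" "ind {p} \<in> CP r" "ind {q} \<in> CP r" by (auto intro: ind_CP)
  have Rnn: "0 \<le> (\<Sum>i\<in>R. x$i)" if "x \<in> CP r" for x using that by (intro sum_nonneg) (auto simp: CP_def)
  have le: "w \<bullet> x \<le> 0" if "x \<in> CP r" for x using Rnn[OF that] wx[of x] by simp
  have eqs: "w \<bullet> ind {} = 0" "w \<bullet> ind {p} = 0" "w \<bullet> ind {q} = 0"
    by (auto simp: wx R_def intro!: sum.neutral)
  have hull: "x \<in> convex hull {ind {}, ind {p}, ind {q}}" if x: "x \<in> CP r" "w \<bullet> x = 0" for x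
  proof -
    have R0: "(\<Sum>i\<in>R. x$i) = 0" using x wx[of x] by simp
    have Rc: "\<forall>i\<in>R. x$i = 0" using R0 x(1) by (subst (asm) sum_nonneg_eq_0_iff) (auto simp: CP_def)
    have t: "x$p + x$q \<le> 1" using CP_pair[OF x(1) pq] .
    have nn: "0 \<le> x$p" "0 \<le> x$q" using x(1) by (auto simp: CP_def)
    have xe: "x = (1 - x$p - x$q) *\<^sub>R ind {} + x$p *\<^sub>R ind {p} + x$q *\<^sub>R ind {q}"
    proof (subst vec_eq_iff, intro allI)
      fix i
      show "x$i = ((1 - x$p - x$q) *\<^sub>R ind {} + x$p *\<^sub>R ind {p} + x$q *\<^sub>R ind {q}) $ i"
        using Rc pq' by (cases "i = p"; cases "i = q") (auto simp: R_def)
    qed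
    have "0 \<le> 1 - x$p - x$q" using t by simp
    then show ?thesis unfolding convex_hull_3 using xe nn by fastforce
  qed
  show ?thesis
    by (rule tri_cert[OF ne3 ind_01 ind_01 ind_01 inC le eqs hull])
qed

end

context fixes r :: "'n::finite \<Rightarrow> nat" begin

definition dc :: "'n set \<Rightarrow> 'n set" where
  "dc U = {p. \<exists>q\<in>U. p = q \<or> r p < r q}"
definition mx :: "'n set \<Rightarrow> 'n set" where
  "mx D = {p\<in>D. \<forall>q\<in>D. \<not> r p < r q}"
definition below :: "nat \<Rightarrow> 'n set" where
  "below j = {p. r p < j}"
definition lvl :: "nat \<Rightarrow> 'n set" where
  "lvl j = {p. r p = j}"
definition top :: "'n set \<Rightarrow> nat" where
  "top D = Max (r ` D)"

lemma down_below: "down r (below j)" by (auto simp: down_def below_def)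

lemma top_ge: "p \<in> D \<Longrightarrow> r p \<le> top D"
  unfolding top_def by (intro Max_ge) auto

lemma top_in: "D \<noteq> {} \<Longrightarrow> \<exists>q\<in>D. r q = top D"
proof -
  assume "D \<noteq> {}"
  then have "Max (r ` D) \<in> r ` D" by (intro Max_in) auto
  then show ?thesis unfolding top_def by auto
qed

lemma mx_eq: "D \<noteq> {} \<Longrightarrow> mx D = {p\<in>D. r p = top D}"
proof -
  assume D: "D \<noteq> {}"
  obtain q where q: "q \<in> D" "r q = top D" using top_in[OF D] by blast
  show ?thesis
  proof (intro set_eqI iffI)
    fix p assume "p \<in> mx D"
    then have "p \<in> D" "\<not> r p < r q" using q unfolding mx_def by auto
    then show "p \<in> {p \<in> D. r p = top D}" using top_ge[of p D] q by auto
  next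
    fix p assume "p \<in> {p \<in> D. r p = top D}"
    then show "p \<in> mx D" unfolding mx_def using top_ge[of _ D] by fastforce
  qed
qed

lemma mx_ne: "D \<noteq> {} \<Longrightarrow> mx D \<noteq> {}"
proof -
  assume D: "D \<noteq> {}"
  obtain q where "q \<in> D" "r q = top D" using top_in[OF D] by blast
  then have "q \<in> mx D" using mx_eq[OF D] by auto
  then show ?thesis by blast
qed

lemma mx_sub: "mx D \<subseteq> D" by (auto simp: mx_def)

lemma down_split: "down r D \<Longrightarrow> D \<noteq> {} \<Longrightarrow> D = below (top D) \<union> mx D"
proof -
  assume d: "down r D" and D: "D \<noteq> {}"
  obtain q where q: "q \<in> D" "r q = top D" using top_in[OF D] by blast
  have "below (top D) \<subseteq> D" using d q unfolding down_def below_def by auto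
  moreover have "D \<subseteq> below (top D) \<union> mx D"
    using top_ge[of _ D] mx_eq[OF D] by (force simp: below_def)
  ultimately show ?thesis using mx_sub by blast
qed

lemma dc_mx: "down r D \<Longrightarrow> dc (mx D) = D"
proof (cases "D = {}")
  case True then show ?thesis by (simp add: dc_def mx_def)
next
  case False
  assume d: "down r D"
  have "dc (mx D) \<subseteq> D" using d mx_sub unfolding dc_def down_def by blast
  moreover have "D \<subseteq> dc (mx D)"
  proof
    fix p assume p: "p \<in> D"
    obtain q where q: "q \<in> D" "r q = top D" using top_in[OF False] by blast
    have qm: "q \<in> mx D" using mx_eq[OF False] q by auto
    show "p \<in> dc (mx D)"
    proof (cases "r p = top D")
      case True then have "p \<in> mx D" using mx_eq[OF False] p by auto
      then show ?thesis by (auto simp: dc_def)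
    next
      case False then have "r p < r q" using top_ge[OF p] q by simp
      then show ?thesis using qm by (auto simp: dc_def)
    qed
  qed
  ultimately show ?thesis by blast
qed

lemma dc_lvl: "X \<noteq> {} \<Longrightarrow> X \<subseteq> lvl l \<Longrightarrow> dc X = below l \<union> X"
  by (auto simp: dc_def below_def lvl_def subset_iff)

lemma top_lvl: "X \<noteq> {} \<Longrightarrow> X \<subseteq> lvl l \<Longrightarrow> top (below l \<union> X) = l"
proof -
  assume X: "X \<noteq> {}" "X \<subseteq> lvl l"
  then obtain x where x: "x \<in> X" by blast
  have "l \<le> top (below l \<union> X)" using top_ge[of x "below l \<union> X"] x X by (auto simp: lvl_def)
  moreover obtain q where "q \<in> below l \<union> X" "r q = top (below l \<union> X)" using top_in[of "below l \<union> X"] x by blast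
  then have "top (below l \<union> X) \<le> l" using X by (auto simp: below_def lvl_def)
  ultimately show ?thesis by simp
qed

lemma mx_lvl: "X \<noteq> {} \<Longrightarrow> X \<subseteq> lvl l \<Longrightarrow> mx (below l \<union> X) = X"
  using top_lvl[of X l] mx_eq[of "below l \<union> X"] by (auto simp: below_def lvl_def)

lemma mx_lvlsub: "D \<noteq> {} \<Longrightarrow> mx D \<subseteq> lvl (top D)"
  using mx_eq by (auto simp: lvl_def)

lemma conn_lvl: "A \<subseteq> lvl l \<Longrightarrow> conn r A \<Longrightarrow> \<exists>a. A = {a}"
  by (auto simp: conn_def lvl_def subset_iff)

lemma top_mono: "D \<subseteq> E \<Longrightarrow> D \<noteq> {} \<Longrightarrow> top D \<le> top E"
  using top_in top_ge by (metis subsetD)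

lemma below_top_sub: "down r D \<Longrightarrow> D \<noteq> {} \<Longrightarrow> below (top D) \<subseteq> D"
  using down_split by blast

end

context fixes r :: "'n::finite \<Rightarrow> nat" begin

definition ctri :: "'n set set \<Rightarrow> bool" where
 "ctri S \<longleftrightarrow> (\<exists>p q. S = {{}, {p}, {q}} \<and> r p \<noteq> r q)
   \<or> (\<exists>X x0 W i j. S = {X, insert x0 X, W} \<and> X \<noteq> {} \<and> W \<noteq> {} \<and> x0 \<notin> X
        \<and> (\<forall>p\<in>insert x0 X. r p = i) \<and> (\<forall>p\<in>W. r p = j) \<and> i \<noteq> j)
   \<or> (\<exists>X Y Z i j k. S = {X,Y,Z} \<and> X \<noteq> {} \<and> Y \<noteq> {} \<and> Z \<noteq> {}
        \<and> (\<forall>p\<in>X. r p = i) \<and> (\<forall>p\<in>Y. r p = j) \<and> (\<forall>p\<in>Z. r p = k) \<and> i \<noteq> j \<and> i \<noteq> k \<and> j \<noteq> k)"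

definition psi :: "'n set \<Rightarrow> 'n set \<Rightarrow> 'n set \<Rightarrow> 'n set set" where
 "psi I J K = (if I \<noteq> {} then {mx r I, mx r J, mx r K}
   else if top r J = top r K \<or> \<not>(\<exists>y. mx r J = {y}) then {mx r (below r (top r J)), mx r J, mx r K}
   else if \<exists>z. mx r K = {z} then {{}, mx r J, mx r K}
   else if \<exists>p. top r J < r p \<and> r p < top r K then {mx r J, mx r (below r (top r K)), mx r K}
   else {lvl r (top r J) - mx r J, lvl r (top r J), mx r K})"

definition theta3 :: "'n set \<Rightarrow> 'n set \<Rightarrow> 'n set \<Rightarrow> 'n set \<times> 'n set \<times> 'n set" where
 "theta3 A B C = (if ocrit r A B C then (A,B,C) else if conn r (C - B) then ({}, B, C)
    else if top r A = top r B then ({}, (B - A) \<union> below r (top r B), C) else ({}, A, C))"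

definition theta :: "'n set set \<Rightarrow> 'n set \<times> 'n set \<times> 'n set" where
 "theta S = theta3 (\<Inter>(dc r ` S)) (THE D. D \<in> dc r ` S \<and> D \<noteq> \<Inter>(dc r ` S) \<and> D \<noteq> \<Union>(dc r ` S)) (\<Union>(dc r ` S))"

lemma theta_eq:
  assumes "A \<subset> B" "B \<subset> C" "dc r ` S = {A,B,C}"
  shows "theta S = theta3 A B C"
proof -
  have i: "\<Inter>(dc r ` S) = A" using assms by auto
  have u: "\<Union>(dc r ` S) = C" using assms by auto
  have t: "(THE D. D \<in> dc r ` S \<and> D \<noteq> A \<and> D \<noteq> C) = B"
    using assms by (intro the_equality) auto
  show ?thesis unfolding theta_def i u t ..
qed

lemma ctri_a: "r p \<noteq> r q \<Longrightarrow> ctri {{}, {p}, {q}}"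
  unfolding ctri_def by (intro disjI1 exI[of _ p] exI[of _ q]) simp

lemma ctri_b: "X \<noteq> {} \<Longrightarrow> W \<noteq> {} \<Longrightarrow> xa \<notin> X \<Longrightarrow> \<forall>p\<in>insert xa X. r p = i \<Longrightarrow> \<forall>p\<in>W. r p = j
   \<Longrightarrow> i \<noteq> j \<Longrightarrow> ctri {X, insert xa X, W}"
  unfolding ctri_def by (intro disjI2 disjI1 exI[of _ X] exI[of _ xa] exI[of _ W] exI[of _ i] exI[of _ j]) simp

lemma ctri_c: "X \<noteq> {} \<Longrightarrow> Y \<noteq> {} \<Longrightarrow> Z \<noteq> {} \<Longrightarrow> \<forall>p\<in>X. r p = i \<Longrightarrow> \<forall>p\<in>Y. r p = j
   \<Longrightarrow> \<forall>p\<in>Z. r p = k \<Longrightarrow> i \<noteq> j \<Longrightarrow> i \<noteq> k \<Longrightarrow> j \<noteq> k \<Longrightarrow> ctri {X, Y, Z}"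
  unfolding ctri_def
  by (intro disjI2 exI[of _ X] exI[of _ Y] exI[of _ Z] exI[of _ i] exI[of _ j] exI[of _ k]) simp

lemma dc_empty: "dc r {} = {}" by (simp add: dc_def)

lemma H2:
  assumes "down r D" "D \<noteq> {}"
  shows "D = below r (top r D) \<union> mx r D" "mx r D \<subseteq> lvl r (top r D)" "mx r D \<noteq> {}"
    "below r (top r D) \<inter> mx r D = {}" "below r (top r D) \<subseteq> D"
  using down_split[OF assms] mx_lvlsub[where r=r, OF assms(2)] mx_ne[where r=r, OF assms(2)]
  by (auto simp: below_def lvl_def)

lemma same_top:
  assumes dI: "down r I" and dJ: "down r J" and IJ: "I \<subseteq> J" and I: "I \<noteq> {}" and t: "top r I = top r J"
  shows "J - I \<subseteq> lvl r (top r J)" "mx r J = mx r I \<union> (J - I)"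
proof -
  have J: "J \<noteq> {}" using IJ I by blast
  have bI: "below r (top r I) \<subseteq> I" using H2[OF dI I] by blast
  show s: "J - I \<subseteq> lvl r (top r J)"
  proof
    fix p assume p: "p \<in> J - I"
    have "r p \<le> top r J" using top_ge p by blast
    moreover have "\<not> r p < top r J" using bI t p by (auto simp: below_def)
    ultimately show "p \<in> lvl r (top r J)" by (simp add: lvl_def)
  qed
  show "mx r J = mx r I \<union> (J - I)"
    using mx_eq[OF J] mx_eq[OF I] s t IJ by (auto simp: lvl_def)
qed

lemma below_top_less: "below r j \<noteq> {} \<Longrightarrow> top r (below r j) < j"
  using top_in[where r=r and D="below r j"] by (auto simp: below_def)

lemma ocrit_basic:
  assumes "ocrit r I J K"
  shows "down r I" "down r J" "down r K" "I \<subset> J" "J \<subset> K" "J \<noteq> {}" "K \<noteq> {}"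
    "conn r (J - I)" "conn r (K - J)" "\<exists>a\<in>J - I. \<exists>b\<in>K - J. r a < r b"
  using assms by (auto simp: ocrit_def)

end

context fixes r :: "'n::finite \<Rightarrow> nat" begin

lemma caseM:
  assumes oc: "ocrit r I J K" and I: "I \<noteq> {}"
  shows "ctri r {mx r I, mx r J, mx r K} \<and> theta r {mx r I, mx r J, mx r K} = (I,J,K)"
proof
  note b = ocrit_basic[OF oc]
  have dcs: "dc r ` {mx r I, mx r J, mx r K} = {I,J,K}" using dc_mx b by auto
  show "theta r {mx r I, mx r J, mx r K} = (I,J,K)"
    using theta_eq[OF b(4) b(5) dcs] oc by (simp add: theta3_def)
  define i where "i = top r I"
  define j where "j = top r J"
  define k where "k = top r K"
  define X where "X = mx r I"
  define Y where "Y = mx r J"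
  define Z where "Z = mx r K"
  have hI: "X \<subseteq> lvl r i" "X \<noteq> {}" using H2[OF b(1) I] by (auto simp: X_def i_def)
  have hJ: "Y \<subseteq> lvl r j" "Y \<noteq> {}" using H2[OF b(2) b(6)] by (auto simp: Y_def j_def)
  have hK: "Z \<subseteq> lvl r k" "Z \<noteq> {}" using H2[OF b(3) b(7)] by (auto simp: Z_def k_def)
  have ij: "i \<le> j" unfolding i_def j_def using top_mono[OF _ I] b(4) by blast
  have jk: "j \<le> k" unfolding j_def k_def using top_mono[OF _ b(6)] b(5) by blast
  have lvX: "\<forall>p\<in>X. r p = i" and lvY: "\<forall>p\<in>Y. r p = j" and lvZ: "\<forall>p\<in>Z. r p = k"
    using hI hJ hK by (auto simp: lvl_def)
  show "ctri r {mx r I, mx r J, mx r K}"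
    unfolding X_def[symmetric] Y_def[symmetric] Z_def[symmetric]
  proof (cases "i = j")
    case True
    have s: "J - I \<subseteq> lvl r j" "Y = X \<union> (J - I)"
      using same_top[OF b(1) b(2) _ I] b(4) True unfolding i_def j_def X_def Y_def by auto
    obtain x0 where x0: "J - I = {x0}" using conn_lvl[OF s(1) b(8)] by blast
    have jk': "j < k"
    proof (rule ccontr)
      assume "\<not> j < k" then have "j = k" using jk by simp
      then have s2: "K - J \<subseteq> lvl r j"
        using same_top[OF b(2) b(3) _ b(6)] b(5) unfolding j_def k_def by auto
      obtain a c where ac: "a \<in> J - I" "c \<in> K - J" "r a < r c" using b(10) by blast
      have "r a = j" "r c = j" using ac(1,2) s(1) s2 by (auto simp: lvl_def)
      then show False using ac(3) by simp
    qed
    have "x0 \<notin> X" using x0 mx_sub[where r=r and D=I] unfolding X_def by auto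
    moreover have "Y = insert x0 X" using s x0 by auto
    moreover have "\<forall>p\<in>insert x0 X. r p = j" using lvY \<open>Y = insert x0 X\<close> by auto
    ultimately show "ctri r {X, Y, Z}" using ctri_b[where r=r and X=X and W=Z and xa=x0 and i=j and j=k] hI hK lvZ jk' by simp
  next
    case False
    then have ij': "i < j" using ij by simp
    show "ctri r {X, Y, Z}"
    proof (cases "j = k")
      case True
      have s: "K - J \<subseteq> lvl r k" "Z = Y \<union> (K - J)"
        using same_top[OF b(2) b(3) _ b(6)] b(5) True unfolding j_def k_def Y_def Z_def by auto
      obtain z where z: "K - J = {z}" using conn_lvl[OF s(1) b(9)] by blast
      have "z \<notin> Y" using z mx_sub[where r=r and D=J] unfolding Y_def by auto
      moreover have "Z = insert z Y" using s z by auto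
      moreover have "\<forall>p\<in>insert z Y. r p = j" using lvZ \<open>Z = insert z Y\<close> True by auto
      moreover have "{X, Y, Z} = {Y, insert z Y, X}" using \<open>Z = insert z Y\<close> by auto
      ultimately show ?thesis using ctri_b[where r=r and X=Y and W=X and xa=z and i=j and j=i] hI hJ lvX ij' by simp
    next
      case False
      then have "j < k" using jk by simp
      then show ?thesis using ctri_c[where r=r and X=X and Y=Y and Z=Z and i=i and j=j and k=k] hI hJ hK lvX lvY lvZ ij' by simp
    qed
  qed
qed

end

context fixes r :: "'n::finite \<Rightarrow> nat" begin

lemma caseE:
  assumes oc: "ocrit r {} J K"
  shows "ctri r (psi r {} J K) \<and> theta r (psi r {} J K) = ({},J,K)"
proof -
  note b = ocrit_basic[OF oc]
  define j where "j = top r J"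
  define k where "k = top r K"
  define Y where "Y = mx r J"
  define Z where "Z = mx r K"
  have hJ: "J = below r j \<union> Y" "Y \<subseteq> lvl r j" "Y \<noteq> {}" "below r j \<inter> Y = {}" "below r j \<subseteq> J"
    using H2[OF b(2) b(6)] unfolding j_def Y_def by auto
  have hK: "K = below r k \<union> Z" "Z \<subseteq> lvl r k" "Z \<noteq> {}" "below r k \<inter> Z = {}" "below r k \<subseteq> K"
    using H2[OF b(3) b(7)] unfolding k_def Z_def by auto
  have jk: "j \<le> k" unfolding j_def k_def using top_mono[OF _ b(6)] b(5) by blast
  have dcY: "dc r Y = J" and dcZ: "dc r Z = K" using dc_mx b unfolding Y_def Z_def by auto
  have Jle: "\<And>p. p \<in> J \<Longrightarrow> r p \<le> j" unfolding j_def by (rule top_ge)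
  have Kle: "\<And>p. p \<in> K \<Longrightarrow> r p \<le> k" unfolding k_def by (rule top_ge)
  have Yl: "\<And>p. p \<in> Y \<Longrightarrow> r p = j" and Zl: "\<And>p. p \<in> Z \<Longrightarrow> r p = k"
    using hJ(2) hK(2) by (auto simp: lvl_def)
  have connJ: "conn r J" using b(8) by simp
  have eqk: "K - J \<subseteq> lvl r j" "Z = Y \<union> (K - J)" if "j = k"
    using same_top[OF b(2) b(3) _ b(6)] b(5) that unfolding j_def k_def Y_def Z_def by auto
  have nocmp: False if asm: "j = k" "J' \<subseteq> J" "\<forall>a\<in>J'. r a = j" "\<exists>a\<in>J'. \<exists>c\<in>K - J. r a < r c" for J'
  proof -
    obtain a c where ac: "a \<in> J'" "c \<in> K - J" "r a < r c" using asm(4) by blast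
    have "r a = j" using asm(3) ac(1) by blast
    moreover have "r c = j" using eqk(1)[OF asm(1)] ac(2) by (auto simp: lvl_def)
    ultimately show False using ac(3) by simp
  qed
  show ?thesis
  proof (cases "j = k \<or> \<not>(\<exists>y. Y = {y})")
    case C1: True
    have ps: "psi r {} J K = {mx r (below r j), Y, Z}"
      using C1 unfolding psi_def j_def k_def Y_def Z_def by auto
    have bne: "below r j \<noteq> {}"
    proof
      assume e: "below r j = {}"
      then have JY: "J = Y" using hJ(1) by simp
      then obtain y where "Y = {y}" using conn_lvl[OF hJ(2)] connJ by auto
      then have jk': "j = k" using C1 by auto
      have "\<forall>a\<in>J. r a = j" using JY Yl by auto
      then show False using nocmp[OF jk' _ _ ] b(10) by auto
    qed
    define h where "h = top r (below r j)"
    define P where "P = mx r (below r j)"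
    have hP: "P \<subseteq> lvl r h" "P \<noteq> {}" using H2[OF down_below[where r=r] bne] unfolding h_def P_def by auto
    have hj: "h < j" unfolding h_def by (rule below_top_less[OF bne])
    have Pl: "\<forall>p\<in>P. r p = h" using hP by (auto simp: lvl_def)
    have dcP: "dc r P = below r j" unfolding P_def by (rule dc_mx[where r=r, OF down_below[where r=r]])
    have ct: "ctri r {P, Y, Z}"
    proof (cases "j = k")
      case True
      obtain z where z: "K - J = {z}" using conn_lvl[OF eqk(1)[OF True] b(9)] by blast
      have zY: "z \<notin> Y" using z hJ(1) by auto
      have Zi: "Z = insert z Y" using eqk(2)[OF True] z by auto
      have "ctri r {Y, insert z Y, P}"
        using ctri_b[where r=r and X=Y and W=P and xa=z and i=j and j=h] hJ(3) hP(2) zY Yl Zi True Zl Pl hj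
        by auto
      moreover have "{P, Y, Z} = {Y, insert z Y, P}" using Zi by auto
      ultimately show ?thesis by simp
    next
      case False
      then have "j < k" "\<not>(\<exists>y. Y = {y})" using C1 jk by auto
      then show ?thesis
        using ctri_c[where r=r and X=P and Y=Y and Z=Z and i=h and j=j and k=k] hP(2) hJ(3) hK(3) Pl Yl Zl hj
        by auto
    qed
    have dcs: "dc r ` {P, Y, Z} = {below r j, J, K}" using dcP dcY dcZ by auto
    have s1: "below r j \<subset> J" using hJ by auto
    have th: "theta r {P, Y, Z} = theta3 r (below r j) J K" by (rule theta_eq[OF s1 b(5) dcs])
    have JbY: "J - below r j = Y" using hJ by auto
    have noc: "\<not> ocrit r (below r j) J K"
    proof
      assume o2: "ocrit r (below r j) J K"
      note b2 = ocrit_basic[OF o2]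
      show False
      proof (cases "j = k")
        case True
        show False using nocmp[OF True, of Y] b2(10) JbY Yl hJ(1) by auto
      next
        case False
        then have ns: "\<not>(\<exists>y. Y = {y})" using C1 by simp
        show False using conn_lvl[OF hJ(2)] b2(8) JbY ns by auto
      qed
    qed
    have "theta3 r (below r j) J K = ({}, J, K)" using noc b(9) by (simp add: theta3_def)
    then show ?thesis using ct th ps unfolding P_def by simp
  next
    case C1: False
    then obtain y where y: "Y = {y}" and jk': "j < k" using jk by auto
    show ?thesis
    proof (cases "\<exists>z. Z = {z}")
      case True
      then obtain z where z: "Z = {z}" by blast
      have ps: "psi r {} J K = {{}, Y, Z}"
        using C1 True unfolding psi_def j_def k_def Y_def Z_def by auto
      have ct: "ctri r {{}, Y, Z}" using ctri_a[where r=r and p=y and q=z] y z Yl Zl jk' by auto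
      have dcs: "dc r ` {{}, Y, Z} = {{}, J, K}" using dcY dcZ dc_empty by auto
      have "theta r {{}, Y, Z} = theta3 r {} J K" by (rule theta_eq[OF b(4) b(5) dcs])
      then show ?thesis using ps ct oc by (simp add: theta3_def)
    next
      case C2: False
      show ?thesis
      proof (cases "\<exists>p. j < r p \<and> r p < k")
        case True
        then obtain p where p: "j < r p" "r p < k" by blast
        have ps: "psi r {} J K = {Y, mx r (below r k), Z}"
          using C1 C2 True unfolding psi_def j_def k_def Y_def Z_def by auto
        have bne: "below r k \<noteq> {}" using p by (auto simp: below_def)
        define h where "h = top r (below r k)"
        define P where "P = mx r (below r k)"
        have hP: "P \<subseteq> lvl r h" "P \<noteq> {}" using H2[OF down_below[where r=r] bne] unfolding h_def P_def by auto
        have hk: "h < k" unfolding h_def by (rule below_top_less[OF bne])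
        have ph: "r p \<le> h" unfolding h_def using p by (intro top_ge) (auto simp: below_def)
        have Pl: "\<forall>p\<in>P. r p = h" using hP by (auto simp: lvl_def)
        have ct: "ctri r {Y, P, Z}"
          using ctri_c[where r=r and X=Y and Y=P and Z=Z and i=j and j=h and k=k] hP(2) hJ(3) hK(3) Pl Yl Zl hk ph p
          by auto
        have dcP: "dc r P = below r k" unfolding P_def by (rule dc_mx[where r=r, OF down_below[where r=r]])
        have dcs: "dc r ` {Y, P, Z} = {J, below r k, K}" using dcP dcY dcZ by auto
        have s1: "J \<subset> below r k"
        proof
          show "J \<subseteq> below r k" using Jle jk' by (force simp: below_def)
          show "J \<noteq> below r k" using Jle p by (force simp: below_def)
        qed
        have s2: "below r k \<subset> K" using hK by auto
        have th: "theta r {Y, P, Z} = theta3 r J (below r k) K" by (rule theta_eq[OF s1 s2 dcs])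
        have KbZ: "K - below r k = Z" using hK by auto
        have nc: "\<not> conn r (K - below r k)" using conn_lvl[OF hK(2)] C2 KbZ by auto
        have noc: "\<not> ocrit r J (below r k) K" using nc by (auto simp: ocrit_def)
        have tJ: "top r J = j" by (simp add: j_def)
        have tb: "top r (below r k) = h" by (simp add: h_def)
        have "theta3 r J (below r k) K = ({}, J, K)" using noc nc tJ tb ph p by (simp add: theta3_def)
        then show ?thesis using ct th ps unfolding P_def by simp
      next
        case C3: False
        have ps: "psi r {} J K = {lvl r j - Y, lvl r j, Z}"
          using C1 C2 C3 unfolding psi_def j_def k_def Y_def Z_def by auto
        have yl: "y \<in> lvl r j" using y hJ(2) by auto
        have KB: "K - (below r j \<union> lvl r j) = Z"
        proof
          show "K - (below r j \<union> lvl r j) \<subseteq> Z"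
          proof
            fix p assume p: "p \<in> K - (below r j \<union> lvl r j)"
            then have "r p > j" by (auto simp: below_def lvl_def)
            moreover have "r p \<le> k" using Kle p by blast
            ultimately have "r p = k" using C3 by force
            then show "p \<in> Z" using p mx_eq[OF b(7)] unfolding Z_def k_def by auto
          qed
          show "Z \<subseteq> K - (below r j \<union> lvl r j)" using hK Zl jk' by (auto simp: below_def lvl_def)
        qed
        have Lne: "lvl r j - Y \<noteq> {}"
        proof
          assume e: "lvl r j - Y = {}"
          then have "J = below r j \<union> lvl r j" using hJ by auto
          then have "K - J = Z" using KB by simp
          then show False using conn_lvl[OF hK(2)] b(9) C2 by auto
        qed
        have ins: "insert y (lvl r j - Y) = lvl r j" using yl y by auto
        have a1: "\<forall>p\<in>insert y (lvl r j - Y). r p = j" unfolding ins by (simp add: lvl_def)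
        have a2: "y \<notin> lvl r j - Y" using y by simp
        have a3: "\<forall>p\<in>Z. r p = k" using Zl by blast
        have "ctri r {lvl r j - Y, insert y (lvl r j - Y), Z}"
          by (rule ctri_b[where r=r and X="lvl r j - Y" and W=Z and xa=y and i=j and j=k, OF Lne hK(3) a2 a1 a3])
            (use jk' in simp)
        then have ct: "ctri r {lvl r j - Y, lvl r j, Z}" unfolding ins .
        have dA: "dc r (lvl r j - Y) = below r j \<union> (lvl r j - Y)" using dc_lvl[OF Lne] by auto
        have lne: "lvl r j \<noteq> {}" using yl by auto
        have dB: "dc r (lvl r j) = below r j \<union> lvl r j" using dc_lvl[OF lne] by auto
        have dcs: "dc r ` {lvl r j - Y, lvl r j, Z} = {below r j \<union> (lvl r j - Y), below r j \<union> lvl r j, K}"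
          using dA dB dcZ by auto
        have s1: "below r j \<union> (lvl r j - Y) \<subset> below r j \<union> lvl r j" using yl y by (auto simp: below_def lvl_def)
        have s2: "below r j \<union> lvl r j \<subset> K"
        proof
          show "below r j \<union> lvl r j \<subseteq> K" using hJ(5) b(5) hK(5) jk' by (auto simp: below_def lvl_def)
          show "below r j \<union> lvl r j \<noteq> K" using KB hK(3) by auto
        qed
        have th: "theta r {lvl r j - Y, lvl r j, Z} = theta3 r (below r j \<union> (lvl r j - Y)) (below r j \<union> lvl r j) K"
          by (rule theta_eq[OF s1 s2 dcs])
        have nc: "\<not> conn r (K - (below r j \<union> lvl r j))" using conn_lvl[OF hK(2)] C2 KB by auto
        have noc: "\<not> ocrit r (below r j \<union> (lvl r j - Y)) (below r j \<union> lvl r j) K" using nc by (auto simp: ocrit_def)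
        have t1: "top r (below r j \<union> (lvl r j - Y)) = j" by (rule top_lvl[OF Lne]) auto
        have t2: "top r (below r j \<union> lvl r j) = j" by (rule top_lvl[OF lne]) auto
        have BA: "(below r j \<union> lvl r j) - (below r j \<union> (lvl r j - Y)) \<union> below r j = J"
          using hJ by (auto simp: below_def lvl_def)
        have "theta3 r (below r j \<union> (lvl r j - Y)) (below r j \<union> lvl r j) K = ({}, J, K)"
          using noc nc t1 t2 BA by (simp add: theta3_def)
        then show ?thesis using ct th ps by simp
      qed
    qed
  qed
qed

end

lemma rank_less:
  fixes le :: "'n::finite \<Rightarrow> 'n \<Rightarrow> bool"
  assumes po: "poset le" and pq: "le p q" "p \<noteq> q"
  shows "rank le p < rank le q"
proof -
  define S where "S = (\<lambda>x. {card C - 1 | C. is_chain le C \<and> x \<in> C \<and> (\<forall>q\<in>C. le q x)})"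
  have fin: "finite (S x)" for x
  proof -
    have "S x \<subseteq> (\<lambda>C::'n set. card C - 1) ` UNIV"
    proof
      fix n assume "n \<in> S x"
      then obtain C :: "'n set" where "n = card C - 1" unfolding S_def by blast
      then show "n \<in> (\<lambda>C::'n set. card C - 1) ` UNIV" by (rule image_eqI) simp
    qed
    then show ?thesis by (rule finite_subset) simp
  qed
  have refl: "le a a" for a using po unfolding poset_def by blast
  have antis: "le a b \<Longrightarrow> le b a \<Longrightarrow> a = b" for a b using po unfolding poset_def by blast
  have trans: "le a b \<Longrightarrow> le b c \<Longrightarrow> le a c" for a b c using po unfolding poset_def by blast
  have ne: "S p \<noteq> {}" unfolding S_def using refl
    by (auto intro!: exI[of _ "{p}"] simp: is_chain_def)
  have rS: "rank le x = Max (S x)" for x by (simp add: rank_def S_def)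
  have "rank le p \<in> S p" unfolding rS using fin ne by (rule Max_in)
  then obtain C :: "'n set" where C: "rank le p = card C - 1" "is_chain le C" "p \<in> C" "\<forall>x\<in>C. le x p"
    unfolding S_def by blast
  define C' where "C' = insert q C"
  have qC: "q \<notin> C" using C(4) pq antis by blast
  have "is_chain le C'" unfolding C'_def is_chain_def
    using C(2,4) pq(1) trans refl unfolding is_chain_def by blast
  moreover have "q \<in> C'" "\<forall>x\<in>C'. le x q" using C(4) pq(1) trans refl by (auto simp: C'_def)
  ultimately have "card C' - 1 \<in> S q" unfolding S_def by blast
  then have "card C' - 1 \<le> rank le q" unfolding rS using fin by (rule Max_ge[rotated])
  moreover have "card C' = card C + 1" using qC by (simp add: C'_def)
  moreover have "card C \<ge> 1" using C(3) by (auto simp: Suc_le_eq card_gt_0_iff)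
  ultimately show ?thesis using C(1) by simp
qed

lemma le_iff_rank:
  fixes le :: "'n::finite \<Rightarrow> 'n \<Rightarrow> bool"
  assumes po: "poset le" and mr: "maximal_ranked le"
  shows "le p q \<longleftrightarrow> p = q \<or> rank le p < rank le q"
proof
  assume lpq: "le p q"
  show "p = q \<or> rank le p < rank le q"
  proof (cases "p = q")
    case False then show ?thesis using rank_less[OF po lpq] by simp
  qed simp
next
  assume h: "p = q \<or> rank le p < rank le q"
  show "le p q"
  proof (cases "p = q")
    case True then show ?thesis using po unfolding poset_def by blast
  next
    case False
    then have lt: "rank le p < rank le q" using h by simp
    then have "rank le p \<noteq> rank le q" by simp
    then have "le p q \<or> le q p" using mr unfolding maximal_ranked_def by blast
    moreover have "\<not> le q p" using rank_less[OF po, of q p] lt False by auto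
    ultimately show ?thesis by blast
  qed
qed

context fixes r :: "'n::finite \<Rightarrow> nat" begin

lemma ctri_face:
  assumes "ctri r S"
  shows "convex hull (ind ` S) \<in> triangular_2faces (CP r) \<and> {v. v extreme_point_of convex hull (ind ` S)} = ind ` S"
  using assms unfolding ctri_def
proof (elim disjE exE conjE)
  fix p q assume "S = {{}, {p}, {q}}" "r p \<noteq> r q"
  then show ?thesis using tri_a[of r p q] by simp
next
  fix X x0 W i j
  assume S: "S = {X, insert x0 X, W}" and h: "X \<noteq> {}" "W \<noteq> {}" "x0 \<notin> X"
     "\<forall>p\<in>insert x0 X. r p = i" "\<forall>p\<in>W. r p = j" "i \<noteq> j"
  show ?thesis unfolding S using tri_b[of X W x0 r i j] h by simp
next
  fix X Y Z i j k
  assume S: "S = {X, Y, Z}" and h: "X \<noteq> {}" "Y \<noteq> {}" "Z \<noteq> {}" "\<forall>p\<in>X. r p = i" "\<forall>p\<in>Y. r p = j"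
    "\<forall>p\<in>Z. r p = k" "i \<noteq> j" "i \<noteq> k" "j \<noteq> k"
  show ?thesis unfolding S using tri_c[of X Y Z r i j k] h by simp
qed

lemma psi_good: "ocrit r I J K \<Longrightarrow> ctri r (psi r I J K) \<and> theta r (psi r I J K) = (I,J,K)"
proof (cases "I = {}")
  case True
  assume "ocrit r I J K"
  then show ?thesis using caseE[of r J K] True by simp
next
  case False
  assume "ocrit r I J K"
  then show ?thesis using caseM[of r I J K] False by (simp add: psi_def)
qed

lemma main_r: "card (triangular_2faces (OP r)) \<le> card (triangular_2faces (CP r))"
proof -
  define Q where "Q = (\<lambda>F (t::'n set \<times> 'n set \<times> 'n set). ocrit r (fst t) (fst (snd t)) (snd (snd t))
      \<and> {v. v extreme_point_of F} = ind ` {fst t, fst (snd t), snd (snd t)}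
      \<and> F = convex hull (ind ` {fst t, fst (snd t), snd (snd t)}))"
  define trip where "trip = (\<lambda>F. SOME t. Q F t)"
  have trip: "ocrit r (fst (trip F)) (fst (snd (trip F))) (snd (snd (trip F)))
      \<and> {v. v extreme_point_of F} = ind ` {fst (trip F), fst (snd (trip F)), snd (snd (trip F))}
      \<and> F = convex hull (ind ` {fst (trip F), fst (snd (trip F)), snd (snd (trip F))})"
    if Fin: "F \<in> triangular_2faces (OP r)" for F
  proof -
    obtain I J K where "ocrit r I J K" "{v. v extreme_point_of F} = ind ` {I,J,K}"
      "F = convex hull (ind ` {I,J,K})" using O_tri[OF Fin] by blast
    then have "Q F (I,J,K)" unfolding Q_def by simp
    then have "Q F (trip F)" unfolding trip_def by (rule someI)
    then show ?thesis unfolding Q_def by simp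
  qed
  define h where "h = (\<lambda>F. convex hull (ind ` (case trip F of (I,J,K) \<Rightarrow> psi r I J K)))"
  have hin: "h F \<in> triangular_2faces (CP r)" if "F \<in> triangular_2faces (OP r)" for F
  proof -
    obtain I J K where t: "trip F = (I,J,K)" by (cases "trip F") auto
    have "ocrit r I J K" using trip[OF that] t by simp
    then have "ctri r (psi r I J K)" using psi_good by blast
    then show ?thesis using ctri_face t unfolding h_def by simp
  qed
  have inj: "inj_on h (triangular_2faces (OP r))"
  proof (rule inj_onI)
    fix F G assume F: "F \<in> triangular_2faces (OP r)" and G: "G \<in> triangular_2faces (OP r)" and e: "h F = h G"
    obtain I J K where t: "trip F = (I,J,K)" by (cases "trip F") auto
    obtain I' J' K' where t': "trip G = (I',J',K')" by (cases "trip G") auto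
    have o: "ocrit r I J K" "ocrit r I' J' K'" using trip[OF F] trip[OF G] t t' by auto
    have c: "ctri r (psi r I J K)" "ctri r (psi r I' J' K')" using psi_good o by blast+
    have "convex hull (ind ` psi r I J K) = convex hull (ind ` psi r I' J' K')" using e t t' by (simp add: h_def)
    then have "ind ` psi r I J K = ind ` psi r I' J' K'" using ctri_face[OF c(1)] ctri_face[OF c(2)] by metis
    then have "psi r I J K = psi r I' J' K'" using ind_inj by (metis inj_image_eq_iff injI)
    then have "(I,J,K) = (I',J',K')" using psi_good[OF o(1)] psi_good[OF o(2)] by metis
    then show "F = G" using trip[OF F] trip[OF G] t t' by simp
  qed
  have fin: "finite (triangular_2faces (CP r))"
  proof (rule finite_subset)
    show "triangular_2faces (CP r) \<subseteq> {F. F face_of CP r}" by (auto simp: triangular_2faces_def)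
    show "finite {F. F face_of CP r}" by (rule finite_polyhedron_faces[OF polyhedron_CP])
  qed
  show ?thesis by (rule card_inj_on_le[OF inj _ fin]) (use hin in blast)
qed

end

theorem corollary3p5:
  fixes le :: "'n::finite \<Rightarrow> 'n \<Rightarrow> bool"
  assumes "poset le"
    and "maximal_ranked le"
  shows "card (triangular_2faces (order_polytope le))
           \<le> card (triangular_2faces (chain_polytope le))"
proof -
  define r where "r = rank le"
  have L: "le p q \<longleftrightarrow> p = q \<or> r p < r q" for p q unfolding r_def by (rule le_iff_rank[OF assms])
  have O: "order_polytope le = OP r"
    unfolding order_polytope_def OP_def L by auto
  have ch: "is_chain le C \<longleftrightarrow> inj_on r C" for C
  proof
    assume "is_chain le C" then show "inj_on r C"
      unfolding is_chain_def inj_on_def L by (metis less_irrefl)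
  next
    assume "inj_on r C" then show "is_chain le C"
      unfolding is_chain_def inj_on_def L by (metis nat_neq_iff)
  qed
  have C: "chain_polytope le = CP r"
    unfolding chain_polytope_def CP_def ch ..
  show ?thesis unfolding O C by (rule main_r)
qed

end
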